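(* The generating series $f(q;x)=\sum_\gamma q^{\omega_H(\gamma)+\omega_{DU}(\gamma)}x^{n(\gamma)}$, where $\gamma$ ranges over all Schröder paths and $n(\gamma)$ is the semi-length, is $$f(q;x)=\frac{1-x-\sqrt{1-2(1+2q)x+(1-2q)^2x^2}}{2qx\,(1+(1-q)x)}.$$
   Context: Steps: $U=(1,1)$, $D=(1,-1)$, $H=(2,0)$. A Schröder path of semi-length $n$ is a lattice path from $(0,0)$ to $(2n,0)$ with steps $U,D,H$ never going below the $x$-axis. Paths are identified with words of steps; $\omega_H(\gamma)$ is the number of $H$ steps and $\omega_{DU}(\gamma)$ the number of occurrences of the factor $DU$ in $\gamma$. *)

theory Defs
  imports Complex_Main
begin

datatype step = U | D | H

fun dy :: "step \<Rightarrow> int" where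
  "dy U = 1" | "dy D = -1" | "dy H = 0"

fun dx :: "step \<Rightarrow> nat" where
  "dx U = 1" | "dx D = 1" | "dx H = 2"

definition schroeder :: "nat \<Rightarrow> step list \<Rightarrow> bool" where
  "schroeder n w \<longleftrightarrow>
     sum_list (map dx w) = 2 * n \<and>
     sum_list (map dy w) = 0 \<and>
     (\<forall>k \<le> length w. sum_list (map dy (take k w)) \<ge> 0)"

definition omega_H :: "step list \<Rightarrow> nat" where
  "omega_H w = length (filter (\<lambda>s. s = H) w)"

definition omega_DU :: "step list \<Rightarrow> nat" where
  "omega_DU w = card {i. Suc i < length w \<and> w ! i = D \<and> w ! Suc i = U}"

definition schroeder_coeff :: "real \<Rightarrow> nat \<Rightarrow> real" where
  "schroeder_coeff q n = (\<Sum>w\<in>{w. schroeder n w}. q ^ (omega_H w + omega_DU w))"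

end

theory Submission
  imports Defs "HOL-Analysis.FPS_Convergence"
begin

definition ht :: "step list \<Rightarrow> int" where "ht w = sum_list (map dy w)"
definition sx :: "step list \<Rightarrow> nat" where "sx w = sum_list (map dx w)"

fun ok :: "int \<Rightarrow> step list \<Rightarrow> bool" where
  "ok c [] = (0 \<le> c)"
| "ok c (s#w) = (0 \<le> c \<and> ok (c + dy s) w)"

lemma ht_simps[simp]: "ht [] = 0" "ht (s#w) = dy s + ht w" "ht (u@v) = ht u + ht v"
  by (auto simp: ht_def)
lemma sx_simps[simp]: "sx [] = 0" "sx (s#w) = dx s + sx w" "sx (u@v) = sx u + sx v"
  by (auto simp: sx_def)

lemma ok_iff: "ok c w = (\<forall>k\<le>length w. 0 \<le> c + sum_list (map dy (take k w)))"
proof (induction w arbitrary: c)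
  case Nil then show ?case by simp
next
  case (Cons s w)
  have "(\<forall>k\<le>length (s#w). 0 \<le> c + sum_list (map dy (take k (s#w)))) =
        (0 \<le> c \<and> (\<forall>k\<le>length w. 0 \<le> c + dy s + sum_list (map dy (take k w))))"
    (is "?L = ?R")
  proof
    assume L: ?L
    have "0 \<le> c" using L[rule_format, of 0] by simp
    moreover have "\<forall>k\<le>length w. 0 \<le> c + dy s + sum_list (map dy (take k w))"
    proof (intro allI impI)
      fix k assume "k \<le> length w"
      then show "0 \<le> c + dy s + sum_list (map dy (take k w))"
        using L[rule_format, of "Suc k"] by (simp add: add.assoc)
    qed
    ultimately show ?R by blast
  next
    assume R: ?R
    show ?L
    proof (intro allI impI)
      fix k assume k: "k \<le> length (s#w)"
      show "0 \<le> c + sum_list (map dy (take k (s#w)))"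
      proof (cases k)
        case 0 with R show ?thesis by simp
      next
        case (Suc j) with k R show ?thesis by (simp add: add.assoc)
      qed
    qed
  qed
  then show ?case using Cons.IH[of "c + dy s"] by simp
qed

lemma schroeder_alt: "schroeder n w \<longleftrightarrow> sx w = 2*n \<and> ht w = 0 \<and> ok 0 w"
  unfolding schroeder_def sx_def ht_def ok_iff by simp

lemma ok_nonneg: "ok c w \<Longrightarrow> 0 \<le> c" by (cases w) auto

lemma ok_append: "ok c (u@v) \<longleftrightarrow> ok c u \<and> ok (c + ht u) v"
  by (induction u arbitrary: c) (auto simp: add.assoc dest: ok_nonneg)

lemma ok_mono: "ok c w \<Longrightarrow> c \<le> c' \<Longrightarrow> ok c' w"
  by (induction w arbitrary: c c') auto

lemma first_return: "0 \<le> c \<Longrightarrow> c + ht w < 0 \<Longrightarrow> \<exists>a b. w = a @ D # b \<and> ok c a \<and> c + ht a = 0"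
proof (induction w arbitrary: c)
  case Nil then show ?case by simp
next
  case (Cons s w)
  show ?case
  proof (cases "c = 0 \<and> s = D")
    case True then show ?thesis by (intro exI[of _ "[]"] exI[of _ w]) simp
  next
    case False
    have "0 \<le> c + dy s" using False Cons.prems(1) by (cases s) auto
    moreover have "c + dy s + ht w < 0" using Cons.prems(2) by (simp add: add.assoc)
    ultimately obtain a b where "w = a @ D # b" "ok (c + dy s) a" "c + dy s + ht a = 0"
      using Cons.IH by blast
    then show ?thesis using Cons.prems(1)
      by (intro exI[of _ "s#a"] exI[of _ b]) (simp add: add.assoc)
  qed
qed

lemma no_D_return: "ok 0 (a @ D # u) \<Longrightarrow> ht a = 0 \<Longrightarrow> False"
  by (auto simp: ok_append dest: ok_nonneg)

lemma split_unique:
  assumes e: "a @ D # b = a' @ D # b'" and "ok 0 a" "ht a = 0" "ok 0 a'" "ht a' = 0"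
  shows "a = a' \<and> b = b'"
proof -
  from e obtain us where "(a = a' @ us \<and> us @ D # b = D # b') \<or> (a @ us = a' \<and> D # b = us @ D # b')"
    by (auto simp: append_eq_append_conv2)
  then show ?thesis
  proof
    assume h: "a = a' @ us \<and> us @ D # b = D # b'"
    show ?thesis
    proof (cases us)
      case Nil with h show ?thesis by simp
    next
      case (Cons s us') with h have "a = a' @ D # us'" by simp
      with assms no_D_return show ?thesis by blast
    qed
  next
    assume h: "a @ us = a' \<and> D # b = us @ D # b'"
    show ?thesis
    proof (cases us)
      case Nil with h show ?thesis by simp
    next
      case (Cons s us') with h have "a' = a @ D # us'" by auto
      with assms no_D_return show ?thesis by blast
    qed
  qed
qed

lemma parity_step: "even (int (dx s) + dy s)" by (cases s) auto

lemma parity: "even (int (sx w) + ht w)"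
proof (induction w)
  case Nil then show ?case by simp
next
  case (Cons s w)
  have "int (sx (s#w)) + ht (s#w) = (int (dx s) + dy s) + (int (sx w) + ht w)" by simp
  then show ?case using Cons parity_step by (metis even_add)
qed

lemma length_le: "length w \<le> sx w"
proof (induction w)
  case (Cons s w) then show ?case by (cases s) auto
qed simp

lemma step_in: "x \<in> {U,D,H}" by (cases x) auto

definition Sch :: "nat \<Rightarrow> step list set" where "Sch n = {w. schroeder n w}"

lemma Sch_sub: "Sch n \<subseteq> {xs. set xs \<subseteq> {U,D,H} \<and> length xs \<le> 2*n}"
proof
  fix w assume "w \<in> Sch n"
  then have "length w \<le> 2*n" using length_le[of w] by (auto simp: Sch_def schroeder_alt)
  moreover have "set w \<subseteq> {U,D,H}" using step_in by blast
  ultimately show "w \<in> {xs. set xs \<subseteq> {U,D,H} \<and> length xs \<le> 2*n}" by simp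
qed

lemma Sch_finite[simp]: "finite (Sch n)"
  by (rule finite_subset[OF Sch_sub finite_lists_length_le]) simp

lemma geo3: "(\<Sum>i\<le>m. (3::nat)^i) \<le> 3^(m+1)"
  by (induction m) auto

lemma Sch_card: "card (Sch n) \<le> 3 * 9^n"
proof -
  have "card (Sch n) \<le> card {xs. set xs \<subseteq> {U,D,H} \<and> length xs \<le> 2*n}"
    by (rule card_mono[OF finite_lists_length_le Sch_sub]) simp
  also have "\<dots> = (\<Sum>i\<le>2*n. 3^i)" by (subst card_lists_length_le) (auto simp: numeral_3_eq_3)
  also have "\<dots> \<le> 3^(2*n+1)" by (rule geo3)
  also have "\<dots> = 3 * 9^n" by (simp add: power_mult)
  finally show ?thesis .
qed

lemma Sch_0: "Sch 0 = {[]}"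
  using length_le by (auto simp: Sch_def schroeder_alt) (metis le_zero_eq length_0_conv length_le)

lemma Sch_Suc: "Sch (Suc n) = (Cons H) ` Sch n \<union> {w \<in> Sch (Suc n). w \<noteq> [] \<and> hd w = U}"
proof
  show "Sch (Suc n) \<subseteq> (Cons H) ` Sch n \<union> {w \<in> Sch (Suc n). w \<noteq> [] \<and> hd w = U}"
  proof
    fix w assume w: "w \<in> Sch (Suc n)"
    then have "w \<noteq> []" by (auto simp: Sch_def schroeder_alt)
    then obtain s w' where ws: "w = s # w'" by (cases w) auto
    show "w \<in> (Cons H) ` Sch n \<union> {w \<in> Sch (Suc n). w \<noteq> [] \<and> hd w = U}"
    proof (cases s)
      case U with w ws show ?thesis by auto
    next
      case D with w ws show ?thesis by (auto simp: Sch_def schroeder_alt dest: ok_nonneg)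
    next
      case H with w ws show ?thesis by (auto simp: Sch_def schroeder_alt)
    qed
  qed
next
  show "(Cons H) ` Sch n \<union> {w \<in> Sch (Suc n). w \<noteq> [] \<and> hd w = U} \<subseteq> Sch (Suc n)"
    by (auto simp: Sch_def schroeder_alt)
qed

definition dec :: "nat \<times> step list \<times> step list \<Rightarrow> step list" where
  "dec = (\<lambda>(i,a,b). U # a @ D # b)"

lemma UStart: "{w \<in> Sch (Suc n). w \<noteq> [] \<and> hd w = U} = dec ` (SIGMA i:{..n}. Sch i \<times> Sch (n-i))"
proof
  show "{w \<in> Sch (Suc n). w \<noteq> [] \<and> hd w = U} \<subseteq> dec ` (SIGMA i:{..n}. Sch i \<times> Sch (n-i))"
  proof
    fix w assume w: "w \<in> {w \<in> Sch (Suc n). w \<noteq> [] \<and> hd w = U}"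
    then obtain rest where wr: "w = U # rest" by (cases w) auto
    from w wr have s: "sx rest = 2*n + 1" "ht rest = -1" "ok 1 rest"
      by (auto simp: Sch_def schroeder_alt)
    obtain a b where ab: "rest = a @ D # b" "ok 0 a" "ht a = 0"
      using first_return[of 0 rest] s by auto
    have okb: "ok 0 b" using s(3) ab by (simp add: ok_append)
    have htb: "ht b = 0" using s(2) ab by simp
    have sxab: "sx a + sx b = 2*n" using s(1) ab by simp
    have "even (sx a)" using parity[of a] ab(3) by simp
    then obtain i where i: "sx a = 2*i" by (auto elim: evenE)
    with sxab have i2: "i \<le> n" "sx b = 2*(n-i)" by auto
    have "(i,a,b) \<in> (SIGMA i:{..n}. Sch i \<times> Sch (n-i))"
      using i i2 ab okb htb by (auto simp: Sch_def schroeder_alt)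
    moreover have "w = dec (i,a,b)" using wr ab by (simp add: dec_def)
    ultimately show "w \<in> dec ` (SIGMA i:{..n}. Sch i \<times> Sch (n-i))" by blast
  qed
next
  show "dec ` (SIGMA i:{..n}. Sch i \<times> Sch (n-i)) \<subseteq> {w \<in> Sch (Suc n). w \<noteq> [] \<and> hd w = U}"
  proof
    fix w assume "w \<in> dec ` (SIGMA i:{..n}. Sch i \<times> Sch (n-i))"
    then obtain i a b where iab: "i \<le> n" "a \<in> Sch i" "b \<in> Sch (n-i)" "w = U # a @ D # b"
      by (auto simp: dec_def)
    have "ok 1 a" using iab(2) by (auto simp: Sch_def schroeder_alt intro: ok_mono)
    then show "w \<in> {w \<in> Sch (Suc n). w \<noteq> [] \<and> hd w = U}"
      using iab by (auto simp: Sch_def schroeder_alt ok_append)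
  qed
qed

lemma dec_inj: "inj_on dec (SIGMA i:{..n}. Sch i \<times> Sch (n-i))"
proof (rule inj_onI)
  fix x y assume x: "x \<in> (SIGMA i:{..n}. Sch i \<times> Sch (n-i))"
    and y: "y \<in> (SIGMA i:{..n}. Sch i \<times> Sch (n-i))" and e: "dec x = dec y"
  obtain i a b where xi: "x = (i,a,b)" by (cases x) auto
  obtain j a' b' where yj: "y = (j,a',b')" by (cases y) auto
  from x y xi yj have h: "ok 0 a" "ht a = 0" "ok 0 a'" "ht a' = 0" "sx a = 2*i" "sx a' = 2*j"
    by (auto simp: Sch_def schroeder_alt)
  from e xi yj have "a @ D # b = a' @ D # b'" by (simp add: dec_def)
  from split_unique[OF this h(1-4)] h(5,6) show "x = y" using xi yj by auto
qed


lemma DU_set_Cons: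
  "{i. Suc i < length (s#w) \<and> (s#w) ! i = D \<and> (s#w) ! Suc i = U} =
   (if s = D \<and> w \<noteq> [] \<and> hd w = U then {0} else {}) \<union>
   Suc ` {i. Suc i < length w \<and> w ! i = D \<and> w ! Suc i = U}" (is "?L = ?R")
proof
  show "?L \<subseteq> ?R"
  proof
    fix i assume i: "i \<in> ?L"
    show "i \<in> ?R"
    proof (cases i)
      case 0 with i show ?thesis by (cases w) auto
    next
      case (Suc j) with i show ?thesis by auto
    qed
  qed
next
  show "?R \<subseteq> ?L" by (cases w) (auto split: if_splits)
qed

lemma omega_DU_Nil[simp]: "omega_DU [] = 0" by (simp add: omega_DU_def)

lemma omega_DU_Cons:
  "omega_DU (s#w) = (if s = D \<and> w \<noteq> [] \<and> hd w = U then 1 else 0) + omega_DU w"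
proof -
  have fin: "finite {i. Suc i < length w \<and> w ! i = D \<and> w ! Suc i = U}"
    by (rule finite_subset[of _ "{..<length w}"]) auto
  show ?thesis
    unfolding omega_DU_def DU_set_Cons
    by (subst card_Un_disjoint) (auto simp: fin card_image)
qed

lemma omega_DU_append:
  "omega_DU (a @ b) = omega_DU a + omega_DU b + (if a \<noteq> [] \<and> b \<noteq> [] \<and> last a = D \<and> hd b = U then 1 else 0)"
proof (induction a)
  case Nil then show ?case by simp
next
  case (Cons s a)
  show ?case
  proof (cases a)
    case Nil then show ?thesis by (simp add: omega_DU_Cons)
  next
    case (Cons t a') then show ?thesis using Cons.IH by (simp add: omega_DU_Cons)
  qed
qed

definition wt :: "step list \<Rightarrow> nat" where "wt w = omega_H w + omega_DU w"
definition ub :: "step list \<Rightarrow> nat" where "ub b = (if b \<noteq> [] \<and> hd b = U then 1 else 0)"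

lemma wt_H: "wt (H # w) = Suc (wt w)"
  by (simp add: wt_def omega_H_def omega_DU_Cons)

lemma wt_dec: "wt (U # a @ D # b) = wt a + (wt b + ub b)"
  by (simp add: wt_def omega_H_def omega_DU_Cons omega_DU_append ub_def)

lemma omega_DU_le: "omega_DU w \<le> length w"
proof -
  have "omega_DU w \<le> card {..<length w}" unfolding omega_DU_def by (rule card_mono) auto
  then show ?thesis by simp
qed

lemma wt_le: "wt w \<le> 2 * length w"
proof -
  have "length (filter (\<lambda>s. s = H) w) \<le> length w" by (rule length_filter_le)
  then show ?thesis using omega_DU_le[of w] unfolding wt_def omega_H_def by linarith
qed


definition BU :: "real \<Rightarrow> nat \<Rightarrow> real" where
  "BU q n = (\<Sum>w\<in>{w \<in> Sch n. w \<noteq> [] \<and> hd w = U}. q ^ wt w)"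

lemma coef_def': "schroeder_coeff q n = (\<Sum>w\<in>Sch n. q ^ wt w)"
  by (simp add: schroeder_coeff_def Sch_def wt_def)

lemma coef_0: "schroeder_coeff q 0 = 1"
  by (simp add: coef_def' Sch_0 wt_def omega_H_def)

lemma BU_0: "BU q 0 = 0"
proof -
  have e: "{w \<in> Sch 0. w \<noteq> [] \<and> hd w = U} = {}" by (auto simp: Sch_0)
  show ?thesis unfolding BU_def e by simp
qed

lemma coef_Suc: "schroeder_coeff q (Suc n) = q * schroeder_coeff q n + BU q (Suc n)"
proof -
  have "schroeder_coeff q (Suc n) = (\<Sum>w\<in>(Cons H) ` Sch n. q ^ wt w) + BU q (Suc n)"
    unfolding coef_def' BU_def
    by (subst Sch_Suc, subst sum.union_disjoint) (auto simp: Sch_Suc[symmetric])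
  also have "(\<Sum>w\<in>(Cons H) ` Sch n. q ^ wt w) = (\<Sum>w\<in>Sch n. q ^ wt (H # w))"
    by (subst sum.reindex) auto
  also have "\<dots> = q * schroeder_coeff q n"
    by (simp add: wt_H coef_def' sum_distrib_left)
  finally show ?thesis .
qed

lemma sum_ub: "(\<Sum>b\<in>Sch m. q ^ (wt b + ub b)) = schroeder_coeff q m + (q - 1) * BU q m"
proof -
  have "(\<Sum>b\<in>Sch m. q ^ (wt b + ub b)) =
        (\<Sum>b\<in>Sch m. q ^ wt b + (q - 1) * (if b \<noteq> [] \<and> hd b = U then q ^ wt b else 0))"
    by (intro sum.cong) (auto simp: ub_def algebra_simps)
  also have "\<dots> = schroeder_coeff q m + (q - 1) * BU q m"
    by (simp add: sum.distrib coef_def' BU_def sum_distrib_left[symmetric] sum.inter_filter)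
  finally show ?thesis .
qed

lemma BU_Suc: "BU q (Suc n) = (\<Sum>i\<le>n. schroeder_coeff q i * (schroeder_coeff q (n-i) + (q-1) * BU q (n-i)))"
proof -
  have "BU q (Suc n) = (\<Sum>w\<in>dec ` (SIGMA i:{..n}. Sch i \<times> Sch (n-i)). q ^ wt w)"
    unfolding BU_def UStart ..
  also have "\<dots> = (\<Sum>x\<in>(SIGMA i:{..n}. Sch i \<times> Sch (n-i)). q ^ wt (dec x))"
    by (rule sum.reindex[OF dec_inj, unfolded comp_def])
  also have "\<dots> = (\<Sum>(i,ab)\<in>(SIGMA i:{..n}. Sch i \<times> Sch (n-i)). (\<lambda>(a,b). q ^ wt a * q ^ (wt b + ub b)) ab)"
    by (intro sum.cong) (auto simp: dec_def wt_dec power_add)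
  also have "\<dots> = (\<Sum>i\<le>n. \<Sum>(a,b)\<in>Sch i \<times> Sch (n-i). q ^ wt a * q ^ (wt b + ub b))"
    by (subst sum.Sigma) auto
  also have "\<dots> = (\<Sum>i\<le>n. (\<Sum>a\<in>Sch i. q ^ wt a) * (\<Sum>b\<in>Sch (n-i). q ^ (wt b + ub b)))"
    by (intro sum.cong refl) (simp add: sum_product sum.cartesian_product)
  also have "\<dots> = (\<Sum>i\<le>n. schroeder_coeff q i * (schroeder_coeff q (n-i) + (q-1) * BU q (n-i)))"
    by (simp add: sum_ub coef_def')
  finally show ?thesis .
qed

lemma ring_aux:
  fixes Q X A :: "'a::comm_ring_1"
  shows "Q * X * (1 + (1 - Q) * X) * A * A + (X - 1) * A + 1 =
     - ((A - 1 - Q * X * A) - X * (A * (A + (Q - 1) * (A - 1 - Q * X * A))))"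
  by (simp add: algebra_simps)

lemma quadratic_fps:
  fixes q :: real
  defines "A \<equiv> Abs_fps (schroeder_coeff q)"
  shows "fps_const q * fps_X * (1 + fps_const (1-q) * fps_X) * A * A + (fps_X - 1) * A + 1 = 0"
proof -
  define B where "B = Abs_fps (BU q)"
  have h1: "A = 1 + fps_const q * fps_X * A + B"
  proof (rule fps_ext)
    fix n show "fps_nth A n = fps_nth (1 + fps_const q * fps_X * A + B) n"
      by (cases n) (simp_all add: A_def B_def coef_0 BU_0 coef_Suc mult.assoc)
  qed
  have h2: "B = fps_X * (A * (A + fps_const (q-1) * B))"
  proof (rule fps_ext)
    fix n show "fps_nth B n = fps_nth (fps_X * (A * (A + fps_const (q-1) * B))) n"
    proof (cases n)
      case 0 then show ?thesis by (simp add: B_def BU_0)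
    next
      case (Suc m)
      have "fps_nth (fps_X * (A * (A + fps_const (q-1) * B))) n = fps_nth (A * (A + fps_const (q-1) * B)) m"
        using Suc by simp
      also have "\<dots> = (\<Sum>i=0..m. fps_nth A i * fps_nth (A + fps_const (q-1) * B) (m-i))"
        by (rule fps_mult_nth)
      also have "\<dots> = fps_nth B n" using Suc by (simp add: A_def B_def BU_Suc atLeast0AtMost)
      finally show ?thesis ..
    qed
  qed
  have hB: "B = A - 1 - fps_const q * fps_X * A" using h1 by (simp add: algebra_simps)
  have e: "A - 1 - fps_const q * fps_X * A =
       fps_X * (A * (A + (fps_const q - 1) * (A - 1 - fps_const q * fps_X * A)))"
    using h2 unfolding hB by (simp add: fps_const_sub[symmetric])
  have "fps_const q * fps_X * (1 + (1 - fps_const q) * fps_X) * A * A + (fps_X - 1) * A + 1 =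
     - ((A - 1 - fps_const q * fps_X * A) -
       fps_X * (A * (A + (fps_const q - 1) * (A - 1 - fps_const q * fps_X * A))))"
    by (rule ring_aux)
  also have "\<dots> = 0" using e by simp
  finally show ?thesis by (simp add: fps_const_sub[symmetric])
qed


lemma coef_bound:
  fixes q :: real
  defines "M \<equiv> max 1 \<bar>q\<bar>"
  shows "\<bar>schroeder_coeff q n\<bar> \<le> 3 * (9 * M^4) ^ n"
proof -
  have M1: "1 \<le> M" by (simp add: M_def)
  have t: "\<bar>q ^ wt w\<bar> \<le> M ^ (4*n)" if "w \<in> Sch n" for w
  proof -
    have "length w \<le> 2*n" using Sch_sub that by blast
    then have "wt w \<le> 4*n" using wt_le[of w] by linarith
    have "\<bar>q ^ wt w\<bar> = \<bar>q\<bar> ^ wt w" by (simp add: power_abs)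
    also have "\<dots> \<le> M ^ wt w" by (rule power_mono) (auto simp: M_def)
    also have "\<dots> \<le> M ^ (4*n)" by (rule power_increasing[OF \<open>wt w \<le> 4*n\<close> M1])
    finally show ?thesis .
  qed
  have "\<bar>schroeder_coeff q n\<bar> \<le> (\<Sum>w\<in>Sch n. \<bar>q ^ wt w\<bar>)"
    unfolding coef_def' by (rule sum_abs)
  also have "\<dots> \<le> (\<Sum>w\<in>Sch n. M ^ (4*n))" by (rule sum_mono) (rule t)
  also have "\<dots> = real (card (Sch n)) * M ^ (4*n)" by simp
  also have "\<dots> \<le> real (3 * 9^n) * M ^ (4*n)"
  proof (rule mult_right_mono)
    show "real (card (Sch n)) \<le> real (3 * 9^n)" using Sch_card[of n] by (simp only: of_nat_le_iff)
  qed (use M1 in simp)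
  also have "\<dots> = 3 * (9 * M^4) ^ n" by (simp add: power_mult power_mult_distrib)
  finally show ?thesis .
qed

lemma rad_mult: "ereal \<bar>x::real\<bar> < fps_conv_radius F \<Longrightarrow> ereal \<bar>x\<bar> < fps_conv_radius G \<Longrightarrow> ereal \<bar>x\<bar> < fps_conv_radius (F * G)"
  using fps_conv_radius_mult[of F G] by (auto simp: min_def split: if_splits)
lemma rad_add: "ereal \<bar>x::real\<bar> < fps_conv_radius F \<Longrightarrow> ereal \<bar>x\<bar> < fps_conv_radius G \<Longrightarrow> ereal \<bar>x\<bar> < fps_conv_radius (F + G)"
  using fps_conv_radius_add[of F G] by (auto simp: min_def split: if_splits)
lemma rad_diff: "ereal \<bar>x::real\<bar> < fps_conv_radius F \<Longrightarrow> ereal \<bar>x\<bar> < fps_conv_radius G \<Longrightarrow> ereal \<bar>x\<bar> < fps_conv_radius (F - G)"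
  using fps_conv_radius_diff[of F G] by (auto simp: min_def split: if_splits)

theorem mainTheorem12:
  fixes q :: real
  assumes "q \<noteq> 0"
  shows "\<exists>r>0. \<forall>x::real. 0 < \<bar>x\<bar> \<and> \<bar>x\<bar> < r \<longrightarrow>
           (\<lambda>n. schroeder_coeff q n * x ^ n) sums
             ((1 - x - sqrt (1 - 2 * (1 + 2 * q) * x + (1 - 2 * q)^2 * x^2))
                / (2 * q * x * (1 + (1 - q) * x)))"
proof -
  define M where "M = max 1 \<bar>q\<bar>"
  define K where "K = 9 * M^4"
  have M1: "1 \<le> M" by (simp add: M_def)
  have K9: "9 \<le> K" unfolding K_def using M1 by (simp add: one_le_power)
  have Kpos: "0 < K" using K9 by simp
  have bnd: "\<And>n. \<bar>schroeder_coeff q n\<bar> \<le> 3 * K^n" unfolding K_def M_def by (rule coef_bound)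
  define A where "A = Abs_fps (schroeder_coeff q)"
  have rad: "ereal (1/K) \<le> fps_conv_radius A"
    unfolding fps_conv_radius_def
  proof (rule conv_radius_geI_ex')
    fix r :: real assume r: "0 < r" "ereal r < ereal (1/K)"
    then have rK: "K * r < 1" using Kpos by (simp add: field_simps)
    have "summable (\<lambda>n. 3 * (K*r)^n)"
      using rK r Kpos by (intro summable_mult summable_geometric) simp
    then show "summable (\<lambda>n. fps_nth A n * of_real r ^ n)"
    proof (rule summable_comparison_test')
      fix n :: nat
      have "norm (fps_nth A n * of_real r ^ n) = \<bar>schroeder_coeff q n\<bar> * r^n"
        using r by (simp add: A_def abs_mult power_abs)
      also have "\<dots> \<le> 3 * K^n * r^n" using r bnd by (intro mult_right_mono) auto
      also have "\<dots> = 3 * (K*r)^n" by (simp add: power_mult_distrib)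
      finally show "norm (fps_nth A n * of_real r ^ n) \<le> 3 * (K*r)^n" .
    qed
  qed
  define r0 where "r0 = min (1/(2*K)) (min (1/(1+\<bar>1-q\<bar>)) (1/(24*\<bar>q\<bar>+1)))"
  have "0 < 1 + \<bar>1-q\<bar>" "0 < 24*\<bar>q\<bar>+1" by (simp_all add: add_pos_nonneg add_nonneg_pos)
  then have r0pos: "0 < r0" unfolding r0_def using Kpos by simp
  show ?thesis
  proof (intro exI[of _ r0] conjI allI impI r0pos)
    fix x :: real assume x: "0 < \<bar>x\<bar> \<and> \<bar>x\<bar> < r0"
    have x1: "\<bar>x\<bar> < 1/(2*K)" "\<bar>x\<bar> < 1/(1+\<bar>1-q\<bar>)" "\<bar>x\<bar> < 1/(24*\<bar>q\<bar>+1)"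
      using x unfolding r0_def by auto
    have xK: "K * \<bar>x\<bar> \<le> 1/2" using x1(1) Kpos by (simp add: field_simps)
    have xr: "norm x < fps_conv_radius A"
    proof -
      have "\<bar>x\<bar> < 1/K" using x1(1) Kpos by (simp add: field_simps)
      then have "ereal (norm x) < ereal (1/K)" by simp
      then show ?thesis using rad by (rule less_le_trans)
    qed
    define S where "S = eval_fps A x"
    have sums: "(\<lambda>n. schroeder_coeff q n * x ^ n) sums S"
      using sums_eval_fps[OF xr] by (simp add: S_def A_def)
    have Sb: "\<bar>S\<bar> \<le> 6"
    proof -
      have ns: "summable (\<lambda>n. norm (schroeder_coeff q n * x ^ n))"
        using norm_summable_fps[OF xr] by (simp add: A_def)
      have gs: "summable (\<lambda>n. 3 * (K*\<bar>x\<bar>)^n)"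
        using xK Kpos by (intro summable_mult summable_geometric) simp
      have "\<bar>S\<bar> = norm (\<Sum>n. schroeder_coeff q n * x ^ n)" using sums by (simp add: sums_iff)
      also have "\<dots> \<le> (\<Sum>n. norm (schroeder_coeff q n * x ^ n))" by (rule summable_norm[OF ns])
      also have "\<dots> \<le> (\<Sum>n. 3 * (K*\<bar>x\<bar>)^n)"
      proof (rule suminf_le[OF _ ns gs])
        fix n
        have "norm (schroeder_coeff q n * x ^ n) = \<bar>schroeder_coeff q n\<bar> * \<bar>x\<bar>^n"
          by (simp add: abs_mult power_abs)
        also have "\<dots> \<le> 3 * K^n * \<bar>x\<bar>^n" using bnd by (intro mult_right_mono) auto
        also have "\<dots> = 3 * (K*\<bar>x\<bar>)^n" by (simp add: power_mult_distrib)
        finally show "norm (schroeder_coeff q n * x ^ n) \<le> 3 * (K*\<bar>x\<bar>)^n" .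
      qed
      also have "\<dots> = 3 * (1 / (1 - K*\<bar>x\<bar>))"
      proof -
        have nc: "norm (K*\<bar>x\<bar>) < 1" using xK Kpos by simp
        show ?thesis using suminf_mult[OF summable_geometric[OF nc], of 3] suminf_geometric[OF nc] by simp
      qed
      also have "\<dots> \<le> 6" using xK by (simp add: field_simps)
      finally show ?thesis .
    qed
    define E where "E = 1 + (1 - q) * x"
    have qx: "\<bar>1-q\<bar> * \<bar>x\<bar> < 1"
    proof -
      have "\<bar>x\<bar> * (1+\<bar>1-q\<bar>) < 1" using x1(2) by (simp add: field_simps)
      then show ?thesis using x by (simp add: algebra_simps)
    qed
    have Eb: "0 < E" "\<bar>E\<bar> \<le> 2"
    proof -
      have "\<bar>(1-q)*x\<bar> < 1" using qx by (simp add: abs_mult)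
      then show "0 < E" "\<bar>E\<bar> \<le> 2" unfolding E_def by auto
    qed
    have quad: "q * x * E * S * S + (x - 1) * S + 1 = 0"
    proof -
      have P: "fps_const q * fps_X * (1 + fps_const (1-q) * fps_X) * A * A + (fps_X - 1) * A + 1 = 0"
        unfolding A_def by (rule quadratic_fps)
      have "eval_fps (fps_const q * fps_X * (1 + fps_const (1-q) * fps_X) * A * A + (fps_X - 1) * A + 1) x
            = q * x * E * S * S + (x - 1) * S + 1"
        using xr by (simp add: eval_fps_mult eval_fps_add eval_fps_diff rad_mult rad_add rad_diff E_def S_def)
      then show ?thesis using P by simp
    qed
    define \<Delta> where "\<Delta> = 1 - 2 * (1 + 2 * q) * x + (1 - 2 * q)^2 * x^2"
    define t where "t = 2*q*x*E*S + x - 1"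
    have "t^2 - \<Delta> = 4*q*x*E*(q * x * E * S * S + (x - 1) * S + 1)"
      unfolding t_def \<Delta>_def E_def by (simp add: power2_eq_square algebra_simps)
    then have tsq: "t^2 = \<Delta>" using quad by simp
    have tneg: "t < 0"
    proof -
      have "\<bar>E\<bar> * \<bar>S\<bar> \<le> 2 * 6" using Eb Sb by (intro mult_mono) auto
      then have "2*\<bar>q\<bar>*\<bar>x\<bar>*(\<bar>E\<bar> * \<bar>S\<bar>) \<le> 2*\<bar>q\<bar>*\<bar>x\<bar>*(2*6)" by (intro mult_left_mono) auto
      then have a: "\<bar>2*q*x*E*S\<bar> \<le> 24*\<bar>q\<bar>*\<bar>x\<bar>" by (simp add: abs_mult)
      have b: "\<bar>x\<bar> * (24*\<bar>q\<bar>+1) < 1" using x1(3) by (simp add: field_simps)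
      have "t \<le> \<bar>2*q*x*E*S\<bar> + \<bar>x\<bar> - 1" unfolding t_def by linarith
      then show ?thesis using a b by (simp add: algebra_simps)
    qed
    have "sqrt \<Delta> = - t" using tsq tneg by (metis real_sqrt_abs abs_of_neg)
    then have num: "1 - x - sqrt \<Delta> = 2*q*x*E*S" unfolding t_def by simp
    have "(1 - x - sqrt \<Delta>) / (2 * q * x * E) = S"
      unfolding num using assms x Eb by (simp add: field_simps)
    then show "(\<lambda>n. schroeder_coeff q n * x ^ n) sums
             ((1 - x - sqrt (1 - 2 * (1 + 2 * q) * x + (1 - 2 * q)^2 * x^2))
                / (2 * q * x * (1 + (1 - q) * x)))"
      using sums unfolding \<Delta>_def E_def by simp
  qed
qed

end
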